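(* Let $\mathcal{G}$ be the information-flow graph of a single-sender single-uniprior index-coding instance with message lengths $q_1,\dots,q_n$. Then \[ \ell^*(\mathcal{G}) \geq \sum_{i:\ i \text{ is a predecessor of some vertex in } \mathcal{L}(\mathcal{G})} q_i . \]
   Context: Single-sender single-uniprior index coding: there are $n$ receivers and $n$ independent messages $x_1,\dots,x_n$; message $x_i$ consists of $q_i\ge 1$ bits, each independently uniformly distributed on $\{0,1\}$. A single sender knows all messages. Receiver $i$ knows $x_i$ a priori and requests a set $\mathcal{W}_i$ of messages with $x_i\notin\mathcal{W}_i$. The information-flow graph is the directed graph $\mathcal{G}=(\mathcal{V},\mathcal{A})$ with $\mathcal{V}=\{1,\dots,n\}$ and an arc $(j\to i)\in\mathcal{A}$ iff $x_j\in\mathcal{W}_i$. An index code of length $\ell$ consists of an encoding function $E:\{0,1\}^{\sum_i q_i}\to\{0,1\}^\ell$ and, for each receiver $i$, a decoding function $D_i$ such that $D_i(E(x_1,\dots,x_n),x_i)$ equals the tuple of messages in $\mathcal{W}_i$ for all values of the messages. $\ell^*(\mathcal{G})$ denotes the minimum length of an index code. A leaf vertex is a vertex with no outgoing arcs; $\mathcal{L}(\mathcal{G})$ is the set of leaf vertices. A vertex $j$ is a predecessor of vertex $i$ iff there is a directed path in $\mathcal{G}$ from $j$ to $i$. *)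

theory Defs
  imports Main
begin

text \<open>An instance is given by its information-flow graph, an arc set A over {1..n}:
  (j,i) in A iff receiver i requests message x_j.\<close>

definition info_flow_graph :: "nat \<Rightarrow> (nat \<times> nat) set \<Rightarrow> bool" where
  "info_flow_graph n A \<longleftrightarrow> A \<subseteq> {1..n} \<times> {1..n} \<and> (\<forall>i. (i, i) \<notin> A)"

definition requests :: "(nat \<times> nat) set \<Rightarrow> nat \<Rightarrow> nat set" where
  "requests A i = {j. (j, i) \<in> A}"

definition messages :: "nat \<Rightarrow> (nat \<Rightarrow> nat) \<Rightarrow> (nat \<Rightarrow> bool list) set" where
  "messages n q = {x. (\<forall>i\<in>{1..n}. length (x i) = q i) \<and> (\<forall>i. i \<notin> {1..n} \<longrightarrow> x i = [])}"

text \<open>E is an encoding function of length l; D i is the decoder of receiver i, which,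
  from the codeword and its own message x_i, outputs the tuple of requested messages.\<close>
definition is_index_code ::
  "nat \<Rightarrow> (nat \<Rightarrow> nat) \<Rightarrow> (nat \<times> nat) set \<Rightarrow> nat \<Rightarrow>
   ((nat \<Rightarrow> bool list) \<Rightarrow> bool list) \<Rightarrow> (nat \<Rightarrow> bool list \<Rightarrow> bool list \<Rightarrow> nat \<Rightarrow> bool list) \<Rightarrow> bool" where
  "is_index_code n q A l E D \<longleftrightarrow>
     (\<forall>x\<in>messages n q. length (E x) = l \<and>
        (\<forall>i\<in>{1..n}. \<forall>j\<in>requests A i. D i (E x) (x i) j = x j))"

definition opt_length :: "nat \<Rightarrow> (nat \<Rightarrow> nat) \<Rightarrow> (nat \<times> nat) set \<Rightarrow> nat" where
  "opt_length n q A = (LEAST l. \<exists>E D. is_index_code n q A l E D)"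

definition leaves :: "nat \<Rightarrow> (nat \<times> nat) set \<Rightarrow> nat set" where
  "leaves n A = {i\<in>{1..n}. \<forall>j. (i, j) \<notin> A}"

definition is_predecessor :: "(nat \<times> nat) set \<Rightarrow> nat \<Rightarrow> nat \<Rightarrow> bool" where
  "is_predecessor A j i \<longleftrightarrow> (j, i) \<in> A\<^sup>+"

end

theory Submission
  imports Defs "HOL-Library.FuncSet"
begin

lemma card_bool_lists: "card {xs::bool list. length xs = m} = 2 ^ m"
proof -
  have "card {xs::bool list. set xs \<subseteq> UNIV \<and> length xs = m} = card (UNIV::bool set) ^ m"
    by (rule card_lists_length_eq) simp
  then show ?thesis by simp
qed

lemma finite_bool_lists: "finite {xs::bool list. length xs = m}"
proof -
  have "finite {xs::bool list. set xs \<subseteq> UNIV \<and> length xs = m}"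
    by (rule finite_lists_length_eq) simp
  then show ?thesis by simp
qed

lemma code_exists: "\<exists>l E D. is_index_code n q A l E D"
proof -
  define E where "E = (\<lambda>x::nat \<Rightarrow> bool list. concat (map x [1..<n+1]))"
  define D where "D = (\<lambda>(i::nat) c (xi::bool list) j. inv_into (messages n q) E c j)"
  have len: "length (E x) = sum_list (map q [1..<n+1])" if "x \<in> messages n q" for x
  proof -
    have eq: "map length (map x [1..<n+1]) = map q [1..<n+1]"
      using that by (auto simp: messages_def)
    have "length (E x) = sum_list (map length (map x [1..<n+1]))"
      unfolding E_def by (rule length_concat)
    also have "\<dots> = sum_list (map q [1..<n+1])" by (simp only: eq)
    finally show ?thesis .
  qed
  have inj: "inj_on E (messages n q)"
  proof (rule inj_onI)
    fix x y assume x: "x \<in> messages n q" and y: "y \<in> messages n q" and e: "E x = E y"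
    have zz: "zip (map x [1..<n+1]) (map y [1..<n+1]) = map (\<lambda>k. (x k, y k)) [1..<n+1]"
      by (simp add: zip_map_map zip_same_conv_map)
    have "\<forall>(a, b) \<in> set (zip (map x [1..<n+1]) (map y [1..<n+1])). length a = length b"
      unfolding zz using x y by (auto simp: messages_def)
    then have "map x [1..<n+1] = map y [1..<n+1]"
      using e unfolding E_def by (subst (asm) concat_eq_concat_iff) auto
    then have "\<forall>i\<in>{1..n}. x i = y i" by auto
    then show "x = y" using x y by (auto simp: messages_def fun_eq_iff)
  qed
  have "is_index_code n q A (sum_list (map q [1..<n+1])) E D"
    unfolding is_index_code_def D_def using len inj by auto
  then show ?thesis by blast
qed

theorem lemma3:
  fixes n :: nat and q :: "nat \<Rightarrow> nat" and A :: "(nat \<times> nat) set"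
  assumes "info_flow_graph n A"
    and "\<forall>i\<in>{1..n}. q i \<ge> 1"
  shows "opt_length n q A \<ge>
           (\<Sum>i\<in>{i\<in>{1..n}. \<exists>l\<in>leaves n A. is_predecessor A i l}. q i)"
proof -
  define P where "P = {i\<in>{1..n}. \<exists>l\<in>leaves n A. is_predecessor A i l}"
  have AS: "A \<subseteq> {1..n} \<times> {1..n}" using assms(1) by (simp add: info_flow_graph_def)
  have bound: "sum q P \<le> l" if code: "is_index_code n q A l E D" for l E D
  proof -
    define c where "c = (\<lambda>k. if k \<in> {1..n} then replicate (q k) False else [])"
    define g where "g = (\<lambda>h k. if k \<in> P then h k else c k)"
    define S where "S = (\<Pi>\<^sub>E k\<in>P. {xs::bool list. length xs = q k})"
    have finP: "finite P" unfolding P_def by simp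
    have PS: "P \<subseteq> {1..n}" unfolding P_def by auto
    have gm: "g h \<in> messages n q" if "h \<in> S" for h
      using that PS unfolding messages_def g_def c_def S_def by (auto simp: PiE_def Pi_def)
    have injg: "inj_on g S"
    proof (rule inj_onI)
      fix h h' assume "h \<in> S" "h' \<in> S" "g h = g h'"
      then show "h = h'" unfolding S_def g_def
        by (auto simp: fun_eq_iff PiE_def extensional_def) metis
    qed
    have key: "g h = g h'" if h: "h \<in> S" and h': "h' \<in> S" and e: "E (g h) = E (g h')" for h h'
    proof -
      let ?x = "g h" and ?y = "g h'"
      have xm: "?x \<in> messages n q" and ym: "?y \<in> messages n q" using gm h h' by auto
      have out: "?x k = ?y k" if "k \<notin> P" for k using that by (simp add: g_def)
      have step: "?x a = ?y a" if ab: "(a, b) \<in> A" and eb: "?x b = ?y b" for a b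
      proof -
        have b: "b \<in> {1..n}" using ab AS by auto
        have "a \<in> requests A b" using ab by (simp add: requests_def)
        then have "D b (E ?x) (?x b) a = ?x a" "D b (E ?y) (?y b) a = ?y a"
          using code b xm ym unfolding is_index_code_def by blast+
        then show ?thesis using e eb by simp
      qed
      have "?x j = ?y j" for j
      proof (cases "j \<in> P")
        case False then show ?thesis by (rule out)
      next
        case True
        then obtain lf where lf: "lf \<in> leaves n A" and tr: "(j, lf) \<in> A\<^sup>+"
          unfolding P_def is_predecessor_def by auto
        have "lf \<notin> P"
        proof
          assume "lf \<in> P"
          then obtain m where "(lf, m) \<in> A\<^sup>+" unfolding P_def is_predecessor_def by auto
          then obtain m' where "(lf, m') \<in> A" by (meson tranclD)
          then show False using lf by (simp add: leaves_def)
        qed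
        then have el: "?x lf = ?y lf" by (rule out)
        from tr show ?thesis
        proof (induction rule: converse_trancl_induct)
          case (base y) then show ?case using step el by blast
        next
          case (step y z) then show ?case using \<open>\<And>a b. (a,b) \<in> A \<Longrightarrow> ?x b = ?y b \<Longrightarrow> ?x a = ?y a\<close> by blast
        qed
      qed
      then show ?thesis by auto
    qed
    have inj: "inj_on (E \<circ> g) S"
      by (rule inj_onI) (use key injg in \<open>auto simp: inj_on_def\<close>)
    have img: "(E \<circ> g) ` S \<subseteq> {xs. length xs = l}"
      using gm code unfolding is_index_code_def by auto
    have "card S \<le> card {xs::bool list. length xs = l}"
      by (rule card_inj_on_le[OF inj img finite_bool_lists])
    moreover have "card S = 2 ^ sum q P"
      unfolding S_def by (simp add: card_PiE[OF finP] card_bool_lists power_sum)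
    ultimately have "(2::nat) ^ sum q P \<le> 2 ^ l" by (simp add: card_bool_lists)
    then show ?thesis by simp
  qed
  obtain l0 E0 D0 where "is_index_code n q A l0 E0 D0" using code_exists by blast
  then have ex: "\<exists>E D. is_index_code n q A l0 E D" by blast
  have "\<exists>E D. is_index_code n q A (opt_length n q A) E D"
    unfolding opt_length_def by (rule LeastI_ex) (use ex in blast)
  then show ?thesis using bound unfolding P_def by blast
qed

end
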